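(* For any integers $m,n\geq 3$, we have $M_{\mathcal{F}_{c}}(G_{m,n})\leq 16$. Moreover, $M_{\mathcal{F}_{c}}(G_{3,3})=16$.
   Context: For integers $m,n\geq 3$, the $m\times n$ grid $G_{m,n}$ is the graph with vertex set $[m]\times[n]$ in which $(u,v)$ and $(i,j)$ are adjacent if and only if either $u=i$ and $v\equiv j\pm 1 \pmod n$, or $v=j$ and $u\equiv i\pm1 \pmod m$. For two graphs on the same vertex set, their symmetric difference is the graph on that vertex set whose edges are those belonging to exactly one of the two graphs. $M_{\mathcal{F}_{c}}(G_{m,n})$ denotes the maximum possible size of a family $\mathcal{G}$ of spanning subgraphs of $G_{m,n}$ such that the symmetric difference of any two distinct members of $\mathcal{G}$ is connected. *)

theory Defs
  imports Main
begin

definition grid_vertices :: "nat \<Rightarrow> nat \<Rightarrow> (nat \<times> nat) set" where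
  "grid_vertices m n = {1..m} \<times> {1..n}"

definition grid_adj :: "nat \<Rightarrow> nat \<Rightarrow> nat \<times> nat \<Rightarrow> nat \<times> nat \<Rightarrow> bool" where
  "grid_adj m n a b \<longleftrightarrow>
     (fst a = fst b \<and> ((snd a mod n = (snd b + 1) mod n) \<or> ((snd a + 1) mod n = snd b mod n))) \<or>
     (snd a = snd b \<and> ((fst a mod m = (fst b + 1) mod m) \<or> ((fst a + 1) mod m = fst b mod m)))"

definition grid_edges :: "nat \<Rightarrow> nat \<Rightarrow> (nat \<times> nat) set set" where
  "grid_edges m n = {{a, b} | a b. a \<in> grid_vertices m n \<and> b \<in> grid_vertices m n \<and> grid_adj m n a b}"

definition graph_connected :: "'v set \<Rightarrow> 'v set set \<Rightarrow> bool" where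
  "graph_connected V E \<longleftrightarrow>
     (\<forall>x\<in>V. \<forall>y\<in>V. (x, y) \<in> {(a, b). {a, b} \<in> E}\<^sup>*)"

text \<open>A spanning subgraph of G_{m,n} is determined by its edge set, a subset of grid_edges.
  A family is admissible if the symmetric difference of any two distinct members is connected.\<close>
definition conn_family :: "nat \<Rightarrow> nat \<Rightarrow> (nat \<times> nat) set set set \<Rightarrow> bool" where
  "conn_family m n \<G> \<longleftrightarrow>
     (\<forall>H\<in>\<G>. H \<subseteq> grid_edges m n) \<and>
     (\<forall>H1\<in>\<G>. \<forall>H2\<in>\<G>. H1 \<noteq> H2 \<longrightarrow>
        graph_connected (grid_vertices m n) ((H1 - H2) \<union> (H2 - H1)))"

definition M_Fc_grid :: "nat \<Rightarrow> nat \<Rightarrow> nat" where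
  "M_Fc_grid m n = Max {card \<G> | \<G>. conn_family m n \<G>}"

end

theory Submission
  imports Defs
begin

lemma grid_adj_sym: "grid_adj m n a b = grid_adj m n b a"
  by (auto simp: grid_adj_def)

lemma mod_self_cases:
  assumes "1 \<le> j" "j \<le> (n::nat)"
  shows "j mod n = (if j = n then 0 else j)"
  using assms by auto

lemma mod_suc_cases:
  assumes "1 \<le> j" "j \<le> (n::nat)" "n \<ge> 3"
  shows "(j + 1) mod n = (if j + 1 = n then 0 else if j = n then 1 else j + 1)"
proof (cases "j = n")
  case True
  then show ?thesis using assms by (simp add: mod_Suc)
next
  case False
  then show ?thesis using assms by (auto simp: mod_Suc)
qed

lemma nbr:
  assumes m: "m \<ge> 3" and n: "n \<ge> 3" and b: "b \<in> grid_vertices m n"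
    and adj: "grid_adj m n (1,1) b"
  shows "b \<in> {(1,2),(1,n),(2,1),(m,1)}"
proof -
  obtain i j where bij: "b = (i,j)" by (cases b)
  have i: "1 \<le> i" "i \<le> m" and j: "1 \<le> j" "j \<le> n"
    using b bij by (auto simp: grid_vertices_def)
  have n1: "(1::nat) mod n = 1" "(1 + 1) mod n = 2" using n by auto
  have m1: "(1::nat) mod m = 1" "(1 + 1) mod m = 2" using m by auto
  note jm = mod_self_cases[OF j] mod_suc_cases[OF j n]
  note im = mod_self_cases[OF i] mod_suc_cases[OF i m]
  from adj bij have
    "(1 = i \<and> (1 mod n = (j + 1) mod n \<or> (1 + 1) mod n = j mod n)) \<or>
     (1 = j \<and> (1 mod m = (i + 1) mod m \<or> (1 + 1) mod m = i mod m))"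
    unfolding grid_adj_def by (simp only: fst_conv snd_conv)
  then show ?thesis
  proof
    assume h: "1 = i \<and> (1 mod n = (j + 1) mod n \<or> (1 + 1) mod n = j mod n)"
    then have "j = n \<or> j = 2"
      unfolding n1 jm using j n by (auto split: if_splits)
    then show ?thesis using h bij by auto
  next
    assume h: "1 = j \<and> (1 mod m = (i + 1) mod m \<or> (1 + 1) mod m = i mod m)"
    then have "i = m \<or> i = 2"
      unfolding m1 im using i m by (auto split: if_splits)
    then show ?thesis using h bij by auto
  qed
qed

lemma edge_at_11:
  assumes m: "m \<ge> 3" and n: "n \<ge> 3" and e: "{(1,1), z} \<in> grid_edges m n"
  shows "z \<in> {(1,2),(1,n),(2,1),(m,1)}"
proof -
  obtain a b where ab: "{(1,1), z} = {a, b}" "a \<in> grid_vertices m n" "b \<in> grid_vertices m n"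
    "grid_adj m n a b" using e by (auto simp: grid_edges_def)
  from ab(1) have "(a = (1,1) \<and> b = z) \<or> (a = z \<and> b = (1,1))"
    by (auto simp: doubleton_eq_iff)
  then show ?thesis
  proof
    assume "a = (1,1) \<and> b = z"
    then show ?thesis using nbr[OF m n] ab by auto
  next
    assume "a = z \<and> b = (1,1)"
    then show ?thesis using nbr[OF m n] ab grid_adj_sym by metis
  qed
qed

lemma card_bool4: "card (UNIV :: (bool \<times> bool \<times> bool \<times> bool) set) = 16"
  by (simp add: UNIV_Times_UNIV[symmetric] card_cartesian_product del: UNIV_Times_UNIV)

lemma ub:
  assumes m: "m \<ge> 3" and n: "n \<ge> 3" and G: "conn_family m n G"
  shows "card G \<le> 16"
proof -
  define v where "v = ((1::nat),(1::nat))"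
  define \<phi> where "\<phi> H = ({v,(1,2)} \<in> H, {v,(1,n)} \<in> H, {v,(2,1)} \<in> H, {v,(m,1)} \<in> H)"
    for H :: "(nat \<times> nat) set set"
  have "inj_on \<phi> G"
  proof (rule inj_onI, rule ccontr)
    fix H1 H2 assume H: "H1 \<in> G" "H2 \<in> G" "\<phi> H1 = \<phi> H2" "H1 \<noteq> H2"
    define D where "D = (H1 - H2) \<union> (H2 - H1)"
    have sub: "D \<subseteq> grid_edges m n" using G H unfolding conn_family_def D_def by blast
    have con: "graph_connected (grid_vertices m n) D"
      using G H unfolding conn_family_def D_def by blast
    have vV: "v \<in> grid_vertices m n" "(1,2) \<in> grid_vertices m n"
      using m n by (auto simp: v_def grid_vertices_def)
    then have "(v, (1,2)) \<in> {(a, b). {a, b} \<in> D}\<^sup>*"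
      using con unfolding graph_connected_def by blast
    then show False
    proof (cases rule: converse_rtranclE)
      case base then show ?thesis by (simp add: v_def)
    next
      case (step z)
      then have zD: "{v, z} \<in> D" by simp
      then have "z \<in> {(1,2),(1,n),(2,1),(m,1)}"
        using edge_at_11[OF m n, of z] sub zD unfolding v_def by blast
      then show ?thesis using zD H(3) unfolding \<phi>_def D_def by auto
    qed
  qed
  then have "card G \<le> card (UNIV :: (bool \<times> bool \<times> bool \<times> bool) set)"
    by (intro card_inj_on_le[where f = \<phi>]) auto
  then show ?thesis using card_bool4 by simp
qed

lemma conn_family_empty: "conn_family m n {}"
  by (simp add: conn_family_def)

lemma card_set_bounded:
  assumes "m \<ge> 3" "n \<ge> 3"
  shows "{card \<G> | \<G>. conn_family m n \<G>} \<subseteq> {..16}"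
  using ub[OF assms] by auto

lemma M_le:
  assumes "m \<ge> 3" "n \<ge> 3"
  shows "M_Fc_grid m n \<le> 16"
proof -
  have fin: "finite {card \<G> | \<G>. conn_family m n \<G>}"
    using card_set_bounded[OF assms] finite_subset by blast
  have ne: "{card \<G> | \<G>. conn_family m n \<G>} \<noteq> {}" using conn_family_empty by blast
  show ?thesis unfolding M_Fc_grid_def
    using fin ne card_set_bounded[OF assms] by (subst Max_le_iff) auto
qed

fun walk :: "'v set set \<Rightarrow> 'v list \<Rightarrow> bool" where
  "walk E [] = True"
| "walk E [x] = True"
| "walk E (x # y # xs) = ({x, y} \<in> E \<and> walk E (y # xs))"

lemma walk_reach:
  "walk E (x # xs) \<Longrightarrow> y \<in> set (x # xs) \<Longrightarrow> (x, y) \<in> {(a, b). {a, b} \<in> E}\<^sup>*"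
proof (induction xs arbitrary: x)
  case Nil then show ?case by simp
next
  case (Cons z zs)
  then have e: "{x, z} \<in> E" and w: "walk E (z # zs)" by auto
  show ?case
  proof (cases "y = x")
    case True then show ?thesis by simp
  next
    case False
    then have "y \<in> set (z # zs)" using Cons.prems by simp
    then have zy: "(z, y) \<in> {(a, b). {a, b} \<in> E}\<^sup>*" using Cons.IH w by blast
    have "(x, z) \<in> {(a, b). {a, b} \<in> E}" using e by simp
    from this zy show ?thesis by (rule converse_rtrancl_into_rtrancl)
  qed
qed

lemma walk_conn:
  assumes "walk E L" "V \<subseteq> set L"
  shows "graph_connected V E"
  unfolding graph_connected_def
proof (intro ballI)
  fix x y assume xy: "x \<in> V" "y \<in> V"
  let ?R = "{(a, b). {a, b} \<in> E}"
  obtain h t where L: "L = h # t" using assms xy by (cases L) auto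
  have hx: "(h, x) \<in> ?R\<^sup>*" and hy: "(h, y) \<in> ?R\<^sup>*"
    using walk_reach[of E h t] assms xy L by auto
  have sym: "?R\<inverse> = ?R" by (auto simp: insert_commute)
  have "(x, h) \<in> ?R\<^sup>*" using hx rtrancl_converseI[of h x ?R] sym by simp
  then show "(x, y) \<in> ?R\<^sup>*" using hy by (rule rtrancl_trans)
qed

lemma gv33: "grid_vertices 3 3 = {(1,1),(1,2),(1,3),(2,1),(2,2),(2,3),(3,1),(3,2),(3,3)}"
  by (auto simp: grid_vertices_def)

definition B1 :: "(nat \<times> nat) set set" where
  "B1 = {{(1,1),(2,1)}, {(1,2),(1,3)}, {(1,2),(2,2)}, {(2,1),(2,2)}, {(2,1),(2,3)}, {(2,3),(3,3)}, {(3,1),(3,3)}, {(3,2),(3,3)}}"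

definition B2 :: "(nat \<times> nat) set set" where
  "B2 = {{(1,1),(1,3)}, {(1,2),(2,2)}, {(1,2),(3,2)}, {(1,3),(2,3)}, {(1,3),(3,3)}, {(2,1),(2,3)}, {(2,1),(3,1)}, {(3,1),(3,3)}, {(3,2),(3,3)}}"

definition B3 :: "(nat \<times> nat) set set" where
  "B3 = {{(1,1),(1,2)}, {(1,1),(1,3)}, {(1,2),(3,2)}, {(1,3),(2,3)}, {(2,1),(2,2)}, {(2,1),(2,3)}, {(2,2),(3,2)}, {(2,3),(3,3)}, {(3,1),(3,2)}}"

definition B4 :: "(nat \<times> nat) set set" where
  "B4 = {{(1,1),(1,2)}, {(1,1),(1,3)}, {(1,1),(3,1)}, {(1,2),(1,3)}, {(1,2),(3,2)}, {(1,3),(3,3)}, {(2,1),(2,2)}, {(2,1),(2,3)}, {(2,1),(3,1)}, {(2,2),(2,3)}, {(2,2),(3,2)}, {(2,3),(3,3)}, {(3,1),(3,3)}}"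


fun fam :: "bool \<times> bool \<times> bool \<times> bool \<Rightarrow> (nat \<times> nat) set set" where
  "fam (a, b, c, d) = {e. (a \<and> e \<in> B1) \<noteq> ((b \<and> e \<in> B2) \<noteq> ((c \<and> e \<in> B3) \<noteq> (d \<and> e \<in> B4)))}"

fun xr :: "bool \<times> bool \<times> bool \<times> bool \<Rightarrow> bool \<times> bool \<times> bool \<times> bool \<Rightarrow> bool \<times> bool \<times> bool \<times> bool" where
  "xr (a, b, c, d) (a', b', c', d') = (a \<noteq> a', b \<noteq> b', c \<noteq> c', d \<noteq> d')"

lemma conn_1: "graph_connected (grid_vertices 3 3) (fam (True, False, False, False))"
  by (rule walk_conn[where L="[(1,1), (2,1), (2,2), (1,2), (1,3), (1,2), (2,2), (2,1), (2,3), (3,3), (3,1), (3,3), (3,2)]"]) (simp_all add: B1_def B2_def B3_def B4_def doubleton_eq_iff gv33)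

lemma conn_2: "graph_connected (grid_vertices 3 3) (fam (False, True, False, False))"
  by (rule walk_conn[where L="[(1,1), (1,3), (2,3), (2,1), (3,1), (3,3), (3,2), (1,2), (2,2)]"]) (simp_all add: B1_def B2_def B3_def B4_def doubleton_eq_iff gv33)

lemma conn_3: "graph_connected (grid_vertices 3 3) (fam (True, True, False, False))"
  by (rule walk_conn[where L="[(1,1), (1,3), (1,2), (3,2), (1,2), (1,3), (2,3), (3,3), (2,3), (1,3), (1,1), (2,1), (2,2), (2,1), (3,1)]"]) (simp_all add: B1_def B2_def B3_def B4_def doubleton_eq_iff gv33)

lemma conn_4: "graph_connected (grid_vertices 3 3) (fam (False, False, True, False))"
  by (rule walk_conn[where L="[(1,1), (1,2), (3,2), (2,2), (2,1), (2,3), (1,3), (2,3), (3,3), (2,3), (2,1), (2,2), (3,2), (3,1)]"]) (simp_all add: B1_def B2_def B3_def B4_def doubleton_eq_iff gv33)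

lemma conn_5: "graph_connected (grid_vertices 3 3) (fam (True, False, True, False))"
  by (rule walk_conn[where L="[(1,1), (1,2), (1,3), (2,3), (1,3), (1,2), (2,2), (3,2), (3,1), (3,3), (3,1), (3,2), (2,2), (1,2), (1,1), (2,1)]"]) (simp_all add: B1_def B2_def B3_def B4_def doubleton_eq_iff gv33)

lemma conn_6: "graph_connected (grid_vertices 3 3) (fam (False, True, True, False))"
  by (rule walk_conn[where L="[(1,1), (1,2), (2,2), (2,1), (3,1), (3,2), (3,3), (1,3), (3,3), (2,3)]"]) (simp_all add: B1_def B2_def B3_def B4_def doubleton_eq_iff gv33)

lemma conn_7: "graph_connected (grid_vertices 3 3) (fam (True, True, True, False))"
  by (rule walk_conn[where L="[(1,1), (1,2), (1,3), (3,3), (1,3), (1,2), (1,1), (2,1), (2,3), (2,1), (3,1), (3,2), (2,2)]"]) (simp_all add: B1_def B2_def B3_def B4_def doubleton_eq_iff gv33)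

lemma conn_8: "graph_connected (grid_vertices 3 3) (fam (False, False, False, True))"
  by (rule walk_conn[where L="[(1,1), (1,2), (1,3), (3,3), (2,3), (2,1), (2,2), (3,2), (2,2), (2,1), (3,1)]"]) (simp_all add: B1_def B2_def B3_def B4_def doubleton_eq_iff gv33)

lemma conn_9: "graph_connected (grid_vertices 3 3) (fam (True, False, False, True))"
  by (rule walk_conn[where L="[(1,1), (1,2), (2,2), (2,3), (2,2), (3,2), (3,3), (1,3), (3,3), (3,2), (2,2), (1,2), (1,1), (2,1), (3,1)]"]) (simp_all add: B1_def B2_def B3_def B4_def doubleton_eq_iff gv33)

lemma conn_10: "graph_connected (grid_vertices 3 3) (fam (False, True, False, True))"
  by (rule walk_conn[where L="[(1,1), (1,2), (1,3), (2,3), (2,2), (2,1), (2,2), (3,2), (3,3), (3,2), (2,2), (2,3), (1,3), (1,2), (1,1), (3,1)]"]) (simp_all add: B1_def B2_def B3_def B4_def doubleton_eq_iff gv33)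

lemma conn_11: "graph_connected (grid_vertices 3 3) (fam (True, True, False, True))"
  by (rule walk_conn[where L="[(1,1), (1,2), (1,1), (2,1), (2,3), (1,3), (2,3), (2,2), (3,2), (2,2), (2,3), (2,1), (1,1), (3,1), (3,3)]"]) (simp_all add: B1_def B2_def B3_def B4_def doubleton_eq_iff gv33)

lemma conn_12: "graph_connected (grid_vertices 3 3) (fam (False, False, True, True))"
  by (rule walk_conn[where L="[(1,1), (3,1), (2,1), (3,1), (3,2), (3,1), (3,3), (1,3), (1,2), (1,3), (2,3), (2,2)]"]) (simp_all add: B1_def B2_def B3_def B4_def doubleton_eq_iff gv33)

lemma conn_13: "graph_connected (grid_vertices 3 3) (fam (True, False, True, True))"
  by (rule walk_conn[where L="[(1,1), (2,1), (2,2), (1,2), (2,2), (2,3), (1,3), (3,3), (3,2), (3,1)]"]) (simp_all add: B1_def B2_def B3_def B4_def doubleton_eq_iff gv33)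

lemma conn_14: "graph_connected (grid_vertices 3 3) (fam (False, True, True, True))"
  by (rule walk_conn[where L="[(1,1), (1,3), (1,2), (2,2), (2,3), (2,1), (2,3), (2,2), (1,2), (3,2), (3,1), (3,2), (3,3)]"]) (simp_all add: B1_def B2_def B3_def B4_def doubleton_eq_iff gv33)

lemma conn_15: "graph_connected (grid_vertices 3 3) (fam (True, True, True, True))"
  by (rule walk_conn[where L="[(1,1), (1,3), (1,1), (2,1), (2,2), (2,3), (3,3), (3,1), (3,2), (1,2)]"]) (simp_all add: B1_def B2_def B3_def B4_def doubleton_eq_iff gv33)

declare fam.simps[simp del]

lemma fam_diff: "(fam p - fam q) \<union> (fam q - fam p) = fam (xr p q)"
  by (cases p; cases q) (auto simp: fam.simps)

lemma conn_all:
  assumes "r \<noteq> (False, False, False, False)"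
  shows "graph_connected (grid_vertices 3 3) (fam r)"
proof -
  obtain a b c d where r: "r = (a, b, c, d)" by (cases r)
  show ?thesis using assms unfolding r
    by (cases a; cases b; cases c; cases d)
      (simp_all only: conn_1 conn_2 conn_3 conn_4 conn_5 conn_6 conn_7 conn_8 conn_9 conn_10
        conn_11 conn_12 conn_13 conn_14 conn_15, simp_all)
qed

lemma not_conn_empty: "\<not> graph_connected (grid_vertices 3 3) {}"
proof
  assume "graph_connected (grid_vertices 3 3) {}"
  then have "((1::nat,1::nat), (1::nat,2::nat)) \<in> {(a, b). {a, b} \<in> ({} :: (nat \<times> nat) set set)}\<^sup>*"
    unfolding graph_connected_def gv33 by blast
  then show False by simp
qed

lemma xr_zero: "xr p q = (False, False, False, False) \<Longrightarrow> p = q"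
  by (cases p; cases q) auto

lemma fam_inj: "inj fam"
proof (rule injI, rule ccontr)
  fix p q assume h: "fam p = fam q" "p \<noteq> q"
  then have "xr p q \<noteq> (False, False, False, False)" using xr_zero by blast
  then have "graph_connected (grid_vertices 3 3) (fam (xr p q))" by (rule conn_all)
  moreover have "fam (xr p q) = {}" using fam_diff[of p q] h(1) by simp
  ultimately show False using not_conn_empty by simp
qed

lemma B_sub: "B1 \<union> B2 \<union> B3 \<union> B4 \<subseteq> grid_edges 3 3"
proof -
  have I: "a \<in> grid_vertices 3 3 \<Longrightarrow> b \<in> grid_vertices 3 3 \<Longrightarrow> grid_adj 3 3 a b \<Longrightarrow> {a, b} \<in> grid_edges 3 3" for a b
    unfolding grid_edges_def by blast
  show ?thesis unfolding B1_def B2_def B3_def B4_def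
    by (intro Un_least insert_subsetI empty_subsetI; rule I) (simp_all add: gv33 grid_adj_def)
qed

lemma fam_sub0: "fam p \<subseteq> B1 \<union> B2 \<union> B3 \<union> B4"
proof
  fix e assume "e \<in> fam p"
  then show "e \<in> B1 \<union> B2 \<union> B3 \<union> B4" by (cases p) (auto simp: fam.simps)
qed

lemma fam_sub: "fam p \<subseteq> grid_edges 3 3"
  using B_sub fam_sub0 by (rule order_trans[rotated])

lemma fam_family: "conn_family 3 3 (range fam)"
  unfolding conn_family_def
proof (intro conjI ballI impI)
  fix H assume "H \<in> range fam"
  then obtain p where hp: "H = fam p" by blast
  show "H \<subseteq> grid_edges 3 3" unfolding hp by (rule fam_sub)
next
  fix H1 H2 assume h: "H1 \<in> range fam" "H2 \<in> range fam" "H1 \<noteq> H2"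
  then obtain p q where pq: "H1 = fam p" "H2 = fam q" by blast
  then have "p \<noteq> q" using h by blast
  then have "xr p q \<noteq> (False, False, False, False)" using xr_zero by blast
  then show "graph_connected (grid_vertices 3 3) ((H1 - H2) \<union> (H2 - H1))"
    unfolding pq fam_diff by (rule conn_all)
qed

lemma card_fam: "card (range fam) = 16"
  using card_image[OF fam_inj] card_bool4 by simp

theorem proposition1p7:
  shows "(\<forall>m n. m \<ge> 3 \<longrightarrow> n \<ge> 3 \<longrightarrow> M_Fc_grid m n \<le> 16) \<and> M_Fc_grid 3 3 = 16"
proof (intro conjI allI impI)
  fix m n :: nat assume "m \<ge> 3" "n \<ge> 3" then show "M_Fc_grid m n \<le> 16" by (rule M_le)
next
  have fin: "finite {card \<G> | \<G>. conn_family 3 3 \<G>}"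
    using card_set_bounded[of 3 3] finite_subset by auto
  have "16 \<in> {card \<G> | \<G>. conn_family 3 3 \<G>}"
    using fam_family card_fam by force
  then have "16 \<le> M_Fc_grid 3 3" unfolding M_Fc_grid_def using fin by (rule Max_ge[rotated])
  moreover have "M_Fc_grid 3 3 \<le> 16" by (rule M_le) auto
  ultimately show "M_Fc_grid 3 3 = 16" by simp
qed

end
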